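(* Let $t\in[0,1]$. For every $\eta\in(0,1)$ there exists a constant $c_\eta>0$ depending only on $\eta$ such that for any $n,p$ and any fixed design $\boldsymbol{X}\in\mathbb{R}^{n\times p}$, $$\mathcal{R}_{1+t,\boldsymbol{X}}\bigl(c_\eta n^{-t/(1+t)}\bigr)\ge 1-\eta.$$
   Context: Data: $\boldsymbol{Z}=\boldsymbol{X}\beta^Z+\boldsymbol{e}$ and $\boldsymbol{Y}=\boldsymbol{X}\beta+b\boldsymbol{Z}+\boldsymbol{\varepsilon}$ with $\beta,\beta^Z\in\mathbb{R}^p$, $b\in\mathbb{R}$, where $\varepsilon_1,\ldots,\varepsilon_n$ are i.i.d. from $\mathbb{P}_\varepsilon$ with mean $0$, $e_1,\ldots,e_n$ are i.i.d. from $\mathbb{P}_e$ with mean $0$, and $\boldsymbol\varepsilon$ is independent of $\boldsymbol e$. For $s>0$, $\mathcal{D}_s$ is the class of distributions of a random variable $\xi$ with $\mathbb{E}[\xi]=0$ and $1\le\mathbb{E}[|\xi|^s]\le2$; $\tilde{\mathcal{D}}$ is the class of distributions with $\mathbb{P}(|\xi|>1/2)>1/2$. $\mathbb{P}_{b}$ denotes the law of the data with coefficient $b$ (for given $\boldsymbol X,\beta,\beta^Z,\mathbb{P}_\varepsilon,\mathbb{P}_e$). With $\Phi$ the class of measurable functions of $(\boldsymbol{X},\boldsymbol{Z},\boldsymbol{Y})$ with values in $\{0,1\}$, the minimax testing risk is $$\mathcal{R}_{s,\boldsymbol{X}}(\tau):=\inf_{\varphi\in\Phi}\Bigl\{\sup_{\mathbb{P}_\varepsilon\in\mathcal{D}_s}\sup_{\mathbb{P}_e\in\mathcal{D}_1\cap\tilde{\mathcal{D}}}\sup_{\beta,\beta^Z\in\mathbb{R}^p}\mathbb{P}_0(\varphi=1)+\sup_{|b|\ge\tau}\sup_{\mathbb{P}_\varepsilon\in\mathcal{D}_s}\sup_{\mathbb{P}_e\in\mathcal{D}_1\cap\tilde{\mathcal{D}}}\sup_{\beta,\beta^Z\in\mathbb{R}^p}\mathbb{P}_b(\varphi=0)\Bigr\}.$$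 *)

theory Defs
  imports "HOL-Probability.Probability"
begin

definition real_dist :: "real measure \<Rightarrow> bool" where
  "real_dist M \<longleftrightarrow> prob_space M \<and> sets M = sets borel"

definition D_class :: "real \<Rightarrow> real measure set" where
  "D_class s = {M. real_dist M \<and> integrable M (\<lambda>x. x) \<and> integral\<^sup>L M (\<lambda>x. x) = 0
      \<and> 1 \<le> (\<integral>\<^sup>+ x. ennreal (\<bar>x\<bar> powr s) \<partial>M)
      \<and> (\<integral>\<^sup>+ x. ennreal (\<bar>x\<bar> powr s) \<partial>M) \<le> 2}"

definition D_tilde :: "real measure set" where
  "D_tilde = {M. real_dist M \<and> measure M {x \<in> space M. \<bar>x\<bar> > 1/2} > 1/2}"

text \<open>Sample space of the observed data (Z, Y), each a vector indexed by {..<n}.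
  The design X (an n x p matrix, entries X i j for i<n, j<p) is fixed.\<close>
definition data_space :: "nat \<Rightarrow> ((nat \<Rightarrow> real) \<times> (nat \<Rightarrow> real)) measure" where
  "data_space n = PiM {..<n} (\<lambda>_. borel) \<Otimes>\<^sub>M PiM {..<n} (\<lambda>_. borel)"

definition data_law ::
  "nat \<Rightarrow> nat \<Rightarrow> (nat \<Rightarrow> nat \<Rightarrow> real) \<Rightarrow> (nat \<Rightarrow> real) \<Rightarrow> (nat \<Rightarrow> real) \<Rightarrow> real
   \<Rightarrow> real measure \<Rightarrow> real measure \<Rightarrow> ((nat \<Rightarrow> real) \<times> (nat \<Rightarrow> real)) measure" where
  "data_law n p X \<beta> \<beta>Z b Peps Pe =
     distr (PiM {..<n} (\<lambda>_. Pe) \<Otimes>\<^sub>M PiM {..<n} (\<lambda>_. Peps)) (data_space n)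
       (\<lambda>(e, eps).
          let Z = restrict (\<lambda>i. (\<Sum>j<p. X i j * \<beta>Z j) + e i) {..<n}
          in (Z, restrict (\<lambda>i. (\<Sum>j<p. X i j * \<beta> j) + b * Z i + eps i) {..<n}))"

text \<open>Tests: measurable {0,1}-valued functions of the data (True = reject = 1).\<close>
definition tests :: "nat \<Rightarrow> (((nat \<Rightarrow> real) \<times> (nat \<Rightarrow> real)) \<Rightarrow> bool) set" where
  "tests n = measurable (data_space n) (count_space UNIV)"

definition type1_err ::
  "real \<Rightarrow> nat \<Rightarrow> nat \<Rightarrow> (nat \<Rightarrow> nat \<Rightarrow> real) \<Rightarrow> (((nat \<Rightarrow> real) \<times> (nat \<Rightarrow> real)) \<Rightarrow> bool) \<Rightarrow> real" where
  "type1_err s n p X \<phi> = Sup {measure (data_law n p X \<beta> \<beta>Z 0 Peps Pe) {w \<in> space (data_space n). \<phi> w} | Peps Pe \<beta> \<beta>Z.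
        Peps \<in> D_class s \<and> Pe \<in> D_class 1 \<inter> D_tilde}"

definition type2_err ::
  "real \<Rightarrow> nat \<Rightarrow> nat \<Rightarrow> (nat \<Rightarrow> nat \<Rightarrow> real) \<Rightarrow> real \<Rightarrow> (((nat \<Rightarrow> real) \<times> (nat \<Rightarrow> real)) \<Rightarrow> bool) \<Rightarrow> real" where
  "type2_err s n p X \<tau> \<phi> = Sup {measure (data_law n p X \<beta> \<beta>Z b Peps Pe) {w \<in> space (data_space n). \<not> \<phi> w} | b Peps Pe \<beta> \<beta>Z.
        \<bar>b\<bar> \<ge> \<tau> \<and> Peps \<in> D_class s \<and> Pe \<in> D_class 1 \<inter> D_tilde}"

definition minimax_risk ::
  "real \<Rightarrow> nat \<Rightarrow> nat \<Rightarrow> (nat \<Rightarrow> nat \<Rightarrow> real) \<Rightarrow> real \<Rightarrow> real" where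
  "minimax_risk s n p X \<tau> = Inf {type1_err s n p X \<phi> + type2_err s n p X \<tau> \<phi> | \<phi>. \<phi> \<in> tests n}"

end

theory Submission
  imports Defs
begin

lemma G_lower:
  fixes y s :: real assumes s: "1 \<le> s"
  shows "2 \<le> \<bar>y+1\<bar> powr s + \<bar>y-1\<bar> powr s"
proof (cases "\<bar>y\<bar> < 1")
  case True
  have c: "convex_on {0<..} (\<lambda>x::real. x powr s)" using powr_convex s by blast
  have "(\<lambda>x::real. x powr s) ((1 - 1/2) *\<^sub>R (y+1) + (1/2) *\<^sub>R (1-y)) \<le> (1 - 1/2) * (y+1) powr s + (1/2) * (1-y) powr s"
    by (rule convex_onD[OF c]) (use True in auto)
  moreover have "(1 - 1/2) *\<^sub>R (y+1) + (1/2) *\<^sub>R (1-y) = (1::real)" by (simp add: field_simps)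
  ultimately have "1 \<le> (1/2) * (y+1) powr s + (1/2) * (1-y) powr s" by simp
  moreover have "\<bar>y+1\<bar> = y+1" "\<bar>y-1\<bar> = 1-y" using True by auto
  ultimately show ?thesis by simp
next
  case False
  have h: "\<bar>y+1\<bar> \<ge> 2 \<or> \<bar>y-1\<bar> \<ge> 2" using False by auto
  have "\<And>x::real. x \<ge> 2 \<Longrightarrow> 2 \<le> x powr s"
  proof -
    fix x :: real assume "x \<ge> 2"
    then have "x powr 1 \<le> x powr s" by (intro powr_mono s) auto
    then show "2 \<le> x powr s" using \<open>x \<ge> 2\<close> by simp
  qed
  then show ?thesis using h by (smt (verit) powr_ge_zero)
qed

lemma G_upper:
  fixes y s :: real assumes s: "0 \<le> s"
  shows "\<bar>y+1\<bar> powr s + \<bar>y-1\<bar> powr s \<le> 2 * (1 + \<bar>y\<bar>) powr s"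
proof -
  have "\<bar>y+1\<bar> powr s \<le> (1 + \<bar>y\<bar>) powr s" by (rule powr_mono2) (use s in auto)
  moreover have "\<bar>y-1\<bar> powr s \<le> (1 + \<bar>y\<bar>) powr s" by (rule powr_mono2) (use s in auto)
  ultimately show ?thesis by simp
qed

lemma small_pow:
  fixes b s :: real assumes s: "1 \<le> s" "s \<le> 2" and b: "0 \<le> b" "b \<le> 1"
  shows "(1+b) powr s \<le> 1 + 3*b"
proof -
  have "(1+b) powr s \<le> (1+b) powr (real 2)" by (rule powr_mono) (use s b in auto)
  also have "\<dots> = (1+b)^2" using b by (subst powr_realpow) auto
  also have "\<dots> \<le> 1 + 3*b" using b by (simp add: power2_eq_square algebra_simps) (smt (verit) mult_left_le_one_le)
  finally show ?thesis .
qed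

lemma big_pow:
  fixes x s r b :: real assumes s: "1 \<le> s" "s \<le> 2" and r: "0 < r" and b: "0 \<le> b" and x: "0 \<le> x" "x \<le> b / r"
  shows "r * (1+x) powr s \<le> 4*r + 4 * (r * (b/r) powr s)"
proof (cases "x \<le> 1")
  case True
  have "(1+x) powr s \<le> 2 powr s" by (rule powr_mono2) (use s True x in auto)
  also have "\<dots> \<le> 2 powr (real 2)" by (rule powr_mono) (use s in auto)
  finally have "(1+x) powr s \<le> 4" by simp
  then have "r * (1+x) powr s \<le> 4 * r" using r by simp
  moreover have "0 \<le> r * (b/r) powr s" using r by simp
  ultimately show ?thesis by linarith
next
  case False
  have "(1+x) powr s \<le> (2 * (b/r)) powr s" by (rule powr_mono2) (use s False x in auto)
  also have "\<dots> = 2 powr s * (b/r) powr s" using b r powr_mult[of 2 "b/r" s] by simp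
  also have "\<dots> \<le> 4 * (b/r) powr s"
  proof -
    have "2 powr s \<le> 2 powr (real 2)" by (rule powr_mono) (use s in auto)
    then show ?thesis by (intro mult_right_mono) auto
  qed
  finally have "r * (1+x) powr s \<le> r * (4 * (b/r) powr s)" using r by simp
  then show ?thesis using r by linarith
qed

lemma nn_fin:
  fixes H :: "'a::finite \<Rightarrow> real" assumes "\<And>x. 0 \<le> H x"
  shows "(\<integral>\<^sup>+x. ennreal (H x) \<partial>measure_pmf M) = ennreal (\<Sum>x\<in>UNIV. H x * pmf M x)"
proof -
  have "(\<integral>\<^sup>+x. ennreal (H x) \<partial>measure_pmf M) = (\<Sum>x\<in>UNIV. ennreal (H x) * ennreal (pmf M x))"
    by (subst nn_integral_measure_pmf_support[of UNIV]) auto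
  also have "\<dots> = (\<Sum>x\<in>UNIV. ennreal (H x * pmf M x))"
    using assms by (simp add: ennreal_mult)
  also have "\<dots> = ennreal (\<Sum>x\<in>UNIV. H x * pmf M x)"
    using assms by (subst sum_ennreal) auto
  finally show ?thesis .
qed

lemma int_fin:
  fixes H :: "'a::finite \<Rightarrow> real"
  shows "(\<integral>x. H x \<partial>measure_pmf M) = (\<Sum>x\<in>UNIV. H x * pmf M x)"
  by (subst integral_measure_pmf_real[of UNIV]) auto

lemma UNIV_bb: "(UNIV :: (bool \<times> bool) set) = {(True,True),(True,False),(False,True),(False,False)}"
  by auto

lemma sum_bb: "(\<Sum>x\<in>(UNIV :: (bool \<times> bool) set). F x) = F (True,True) + F (True,False) + F (False,True) + F (False,False)"
  by (simp add: UNIV_bb add.assoc)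

definition fE :: "real \<Rightarrow> bool \<Rightarrow> real" where "fE r u = (if u then 1 else -((1-r)/r))"
definition gE :: "bool \<Rightarrow> real" where "gE v = (if v then 1 else -1)"
definition WW :: "real \<Rightarrow> (bool \<times> bool) measure" where
  "WW r = measure_pmf (pair_pmf (bernoulli_pmf (1-r)) (bernoulli_pmf (1/2)))"
definition PeM :: "real \<Rightarrow> real measure" where "PeM r = distr (WW r) borel (\<lambda>w. fE r (fst w))"
definition PepsM :: "real \<Rightarrow> real \<Rightarrow> real measure" where
  "PepsM b r = distr (WW r) borel (\<lambda>w. b * fE r (fst w) + gE (snd w))"

lemma prob_WW: "prob_space (WW r)" by (simp add: WW_def prob_space_measure_pmf)

lemma pmf_WW: "0 \<le> r \<Longrightarrow> r \<le> 1 \<Longrightarrow> pmf (pair_pmf (bernoulli_pmf (1-r)) (bernoulli_pmf (1/2))) (u,v) = (if u then 1 - r else r) / 2"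
  by (simp add: pmf_pair)

lemma real_dist_distr_WW: "real_dist (distr (WW r) borel h)"
  unfolding real_dist_def by (auto intro!: prob_space.prob_space_distr prob_WW simp: WW_def prob_space_measure_pmf)

lemma nn_WW:
  assumes "0 \<le> r" "r \<le> 1"
  shows "(\<integral>\<^sup>+x. ennreal (\<bar>x\<bar> powr s) \<partial>distr (WW r) borel (\<lambda>w. h w)) =
     ennreal ((1-r)/2 * (\<bar>h (True,True)\<bar> powr s + \<bar>h (True,False)\<bar> powr s) + r/2 * (\<bar>h (False,True)\<bar> powr s + \<bar>h (False,False)\<bar> powr s))"
proof -
  have "(\<integral>\<^sup>+x. ennreal (\<bar>x\<bar> powr s) \<partial>distr (WW r) borel (\<lambda>w. h w)) = (\<integral>\<^sup>+w. ennreal (\<bar>h w\<bar> powr s) \<partial>WW r)"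
    by (subst nn_integral_distr) (auto simp: WW_def)
  also have "\<dots> = ennreal (\<Sum>x\<in>UNIV. \<bar>h x\<bar> powr s * pmf (pair_pmf (bernoulli_pmf (1-r)) (bernoulli_pmf (1/2))) x)"
    unfolding WW_def by (rule nn_fin) auto
  also have "\<dots> = ennreal ((1-r)/2 * (\<bar>h (True,True)\<bar> powr s + \<bar>h (True,False)\<bar> powr s) + r/2 * (\<bar>h (False,True)\<bar> powr s + \<bar>h (False,False)\<bar> powr s))"
    using assms by (simp add: sum_bb pmf_WW algebra_simps)
  finally show ?thesis .
qed

lemma int_WW:
  assumes "0 \<le> r" "r \<le> 1"
  shows "(\<integral>x. x \<partial>distr (WW r) borel (\<lambda>w. h w)) =
     (1-r)/2 * (h (True,True) + h (True,False)) + r/2 * (h (False,True) + h (False,False))"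
proof -
  have "(\<integral>x. x \<partial>distr (WW r) borel (\<lambda>w. h w)) = (\<integral>w. h w \<partial>WW r)"
    by (subst integral_distr) (auto simp: WW_def)
  also have "\<dots> = (\<Sum>x\<in>UNIV. h x * pmf (pair_pmf (bernoulli_pmf (1-r)) (bernoulli_pmf (1/2))) x)"
    unfolding WW_def by (rule int_fin)
  also have "\<dots> = (1-r)/2 * (h (True,True) + h (True,False)) + r/2 * (h (False,True) + h (False,False))"
    using assms by (simp add: sum_bb pmf_WW algebra_simps)
  finally show ?thesis .
qed

lemma integrable_WW: fixes h :: "bool \<times> bool \<Rightarrow> real" shows "integrable (distr (WW r) borel (\<lambda>w. h w)) (\<lambda>x. x)"
  by (subst integrable_distr_eq[of h "WW r" borel "\<lambda>x::real. x"]) (auto simp: WW_def intro!: integrable_measure_pmf_finite)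

lemma PeM_in:
  assumes r: "0 < r" "r \<le> 1/8"
  shows "PeM r \<in> D_class 1 \<inter> D_tilde"
proof -
  have K: "(1-r)/r > 1/2" using r by (simp add: field_simps)
  have i: "integral\<^sup>L (PeM r) (\<lambda>x. x) = 0"
    unfolding PeM_def using r by (subst int_WW) (auto simp: fE_def field_simps)
  have n: "(\<integral>\<^sup>+ x. ennreal (\<bar>x\<bar> powr 1) \<partial>PeM r) = ennreal (2 * (1-r))"
    unfolding PeM_def using r K by (subst nn_WW) (auto simp: fE_def field_simps)
  have m: "measure (PeM r) {x \<in> space (PeM r). \<bar>x\<bar> > 1/2} = 1"
  proof -
    have "measure (PeM r) {x \<in> space (PeM r). \<bar>x\<bar> > 1/2} = measure (WW r) ((\<lambda>w. fE r (fst w)) -` {x \<in> space (PeM r). \<bar>x\<bar> > 1/2} \<inter> space (WW r))"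
      unfolding PeM_def by (rule measure_distr) (auto simp: WW_def)
    also have "(\<lambda>w. fE r (fst w)) -` {x \<in> space (PeM r). \<bar>x\<bar> > 1/2} \<inter> space (WW r) = space (WW r)"
      using K r by (auto simp: PeM_def fE_def)
    also have "measure (WW r) (space (WW r)) = 1" using prob_WW prob_space.prob_space by blast
    finally show ?thesis .
  qed
  show ?thesis
    unfolding D_class_def D_tilde_def using r i n m ennreal_leI[of "2-2*r" 2] ennreal_leI[of 1 "2-2*r"]
    by (auto simp: PeM_def real_dist_distr_WW integrable_WW)
qed

lemma PepsM_in:
  assumes s: "1 \<le> s" "s \<le> 2" and b: "0 \<le> b" "b \<le> 1/16" and r: "0 < r" "r \<le> 1/8"
    and br: "r * (b/r) powr s \<le> 1/16"
  shows "PepsM b r \<in> D_class s"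
proof -
  define K where "K = (1-r)/r"
  have K0: "0 \<le> K" using r by (simp add: K_def)
  have bK: "b * K \<le> b / r" using r b by (simp add: K_def field_simps mult_left_le)
  have i: "integral\<^sup>L (PepsM b r) (\<lambda>x. x) = 0"
    unfolding PepsM_def using r by (subst int_WW) (auto simp: fE_def gE_def field_simps)
  define V where "V = (1-r)/2 * (\<bar>b+1\<bar> powr s + \<bar>b-1\<bar> powr s) + r/2 * (\<bar>(-(b*K))+1\<bar> powr s + \<bar>(-(b*K))-1\<bar> powr s)"
  have n: "(\<integral>\<^sup>+ x. ennreal (\<bar>x\<bar> powr s) \<partial>PepsM b r) = ennreal V"
    unfolding PepsM_def V_def K_def using r by (subst nn_WW) (auto simp: fE_def gE_def)
  have l1: "2 \<le> \<bar>b+1\<bar> powr s + \<bar>b-1\<bar> powr s" by (rule G_lower) (use s in auto)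
  have l2: "2 \<le> \<bar>(-(b*K))+1\<bar> powr s + \<bar>(-(b*K))-1\<bar> powr s" by (rule G_lower) (use s in auto)
  have V1: "1 \<le> V"
  proof -
    have "(1-r)/2 * 2 \<le> (1-r)/2 * (\<bar>b+1\<bar> powr s + \<bar>b-1\<bar> powr s)" using l1 r by (intro mult_left_mono) auto
    moreover have "r/2 * 2 \<le> r/2 * (\<bar>(-(b*K))+1\<bar> powr s + \<bar>(-(b*K))-1\<bar> powr s)" using l2 r by (intro mult_left_mono) auto
    moreover have "(1-r)/2*2 = 1-r" "r/2*2 = r" by simp_all
    ultimately show ?thesis unfolding V_def by linarith
  qed
  have u1: "\<bar>b+1\<bar> powr s + \<bar>b-1\<bar> powr s \<le> 2 * (1 + 3*b)"
  proof -
    have "\<bar>b+1\<bar> powr s + \<bar>b-1\<bar> powr s \<le> 2 * (1 + \<bar>b\<bar>) powr s" by (rule G_upper) (use s in auto)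
    also have "(1 + \<bar>b\<bar>) powr s \<le> 1 + 3*b" using small_pow[of s b] s b by simp
    finally show ?thesis by simp
  qed
  have u2: "r * (\<bar>(-(b*K))+1\<bar> powr s + \<bar>(-(b*K))-1\<bar> powr s) \<le> 2 * (4*r + 4 * (r * (b/r) powr s))"
  proof -
    have "\<bar>(-(b*K))+1\<bar> powr s + \<bar>(-(b*K))-1\<bar> powr s \<le> 2 * (1 + \<bar>-(b*K)\<bar>) powr s" by (rule G_upper) (use s in auto)
    also have "\<bar>-(b*K)\<bar> = b*K" using b K0 by simp
    finally have "r * (\<bar>(-(b*K))+1\<bar> powr s + \<bar>(-(b*K))-1\<bar> powr s) \<le> r * (2 * (1 + b*K) powr s)"
      using r by (intro mult_left_mono) auto
    also have "\<dots> = 2 * (r * (1 + b*K) powr s)" by simp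
    also have "r * (1 + b*K) powr s \<le> 4*r + 4 * (r * (b/r) powr s)"
      by (rule big_pow) (use s r b K0 bK in auto)
    finally show ?thesis by simp
  qed
  have V2: "V \<le> 2"
  proof -
    have "(1-r)/2 * (\<bar>b+1\<bar> powr s + \<bar>b-1\<bar> powr s) \<le> (1-r)/2 * (2 * (1 + 3*b))"
      using u1 r by (intro mult_left_mono) auto
    also have "\<dots> \<le> 1 + 3*b" using r b by (simp add: field_simps)
    finally have a: "(1-r)/2 * (\<bar>b+1\<bar> powr s + \<bar>b-1\<bar> powr s) \<le> 1 + 3*b" .
    have c: "r/2 * (\<bar>(-(b*K))+1\<bar> powr s + \<bar>(-(b*K))-1\<bar> powr s) \<le> 4*r + 4 * (r * (b/r) powr s)"
      using u2 by simp
    show ?thesis unfolding V_def using a c b r br by linarith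
  qed
  show ?thesis
    unfolding D_class_def using i n V1 V2 ennreal_leI[of V 2] ennreal_leI[of 1 V]
    by (auto simp: PepsM_def real_dist_distr_WW integrable_WW)
qed

definition dmap :: "nat \<Rightarrow> nat \<Rightarrow> (nat\<Rightarrow>nat\<Rightarrow>real) \<Rightarrow> (nat\<Rightarrow>real) \<Rightarrow> (nat\<Rightarrow>real) \<Rightarrow> real \<Rightarrow> ((nat\<Rightarrow>real)\<times>(nat\<Rightarrow>real)) \<Rightarrow> ((nat\<Rightarrow>real)\<times>(nat\<Rightarrow>real))" where
 "dmap n p X \<beta> \<beta>Z b = (\<lambda>(e, eps). let Z = restrict (\<lambda>i. (\<Sum>j<p. X i j * \<beta>Z j) + e i) {..<n}
          in (Z, restrict (\<lambda>i. (\<Sum>j<p. X i j * \<beta> j) + b * Z i + eps i) {..<n}))"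

lemma data_law_dmap: "data_law n p X \<beta> \<beta>Z b Peps Pe = distr (PiM {..<n} (\<lambda>_. Pe) \<Otimes>\<^sub>M PiM {..<n} (\<lambda>_. Peps)) (data_space n) (dmap n p X \<beta> \<beta>Z b)"
  by (simp add: data_law_def dmap_def)

lemma dmap_meas: "dmap n p X \<beta> \<beta>Z b \<in> measurable (PiM {..<n} (\<lambda>_. borel) \<Otimes>\<^sub>M PiM {..<n} (\<lambda>_. borel)) (data_space n)"
proof -
  have 1: "(\<lambda>x. restrict (\<lambda>i. (\<Sum>j<p. X i j * \<beta>Z j) + fst x i) {..<n}) \<in> measurable (PiM {..<n} (\<lambda>_. borel) \<Otimes>\<^sub>M PiM {..<n} (\<lambda>_. (borel::real measure))) (PiM {..<n} (\<lambda>_. borel))"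
    by measurable
  have 2: "(\<lambda>x. restrict (\<lambda>i. (\<Sum>j<p. X i j * \<beta> j) + b * ((\<Sum>j<p. X i j * \<beta>Z j) + fst x i) + snd x i) {..<n}) \<in> measurable (PiM {..<n} (\<lambda>_. borel) \<Otimes>\<^sub>M PiM {..<n} (\<lambda>_. (borel::real measure))) (PiM {..<n} (\<lambda>_. borel))"
    by measurable
  have e: "dmap n p X \<beta> \<beta>Z b = (\<lambda>x. (restrict (\<lambda>i. (\<Sum>j<p. X i j * \<beta>Z j) + fst x i) {..<n},
      restrict (\<lambda>i. (\<Sum>j<p. X i j * \<beta> j) + b * ((\<Sum>j<p. X i j * \<beta>Z j) + fst x i) + snd x i) {..<n}))"
    by (auto simp: dmap_def Let_def fun_eq_iff restrict_def split_beta')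
  show ?thesis unfolding e data_space_def
    using 1 2 by (intro measurable_Pair) 
qed

lemma pair_PiM_prob:
  assumes "prob_space A" "prob_space B"
  shows "pair_prob_space (PiM I (\<lambda>_. A)) (PiM I (\<lambda>_. B))"
proof -
  have a: "prob_space (PiM I (\<lambda>_. A))" "prob_space (PiM I (\<lambda>_. B))" using assms by (auto intro!: prob_space_PiM)
  show ?thesis
    by (rule pair_prob_space.intro) (use a in \<open>auto intro!: pair_sigma_finite.intro prob_space_imp_sigma_finite\<close>)
qed

lemma dmap_meas':
  assumes "sets Pe = sets borel" "sets Peps = sets borel"
  shows "dmap n p X \<beta> \<beta>Z b \<in> measurable (PiM {..<n} (\<lambda>_. Pe) \<Otimes>\<^sub>M PiM {..<n} (\<lambda>_. Peps)) (data_space n)"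
proof -
  have "sets (PiM {..<n} (\<lambda>_. Pe) \<Otimes>\<^sub>M PiM {..<n} (\<lambda>_. Peps)) = sets (PiM {..<n} (\<lambda>_. borel) \<Otimes>\<^sub>M PiM {..<n} (\<lambda>_. (borel::real measure)))"
    using assms by (intro sets_pair_measure_cong sets_PiM_cong) auto
  then show ?thesis using dmap_meas measurable_cong_sets by blast
qed

lemma prob_data_law:
  assumes "real_dist Peps" "real_dist Pe"
  shows "prob_space (data_law n p X \<beta> \<beta>Z b Peps Pe)"
proof -
  interpret P: pair_prob_space "PiM {..<n} (\<lambda>_. Pe)" "PiM {..<n} (\<lambda>_. Peps)"
    using assms by (intro pair_PiM_prob) (auto simp: real_dist_def)
  show ?thesis unfolding data_law_dmap
    by (rule P.prob_space_distr) (use assms dmap_meas' in \<open>auto simp: real_dist_def\<close>)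
qed

lemma prob_PeM: "prob_space (PeM r)"
  using real_dist_distr_WW unfolding PeM_def real_dist_def by auto
lemma prob_distr_WW: fixes h :: "bool \<times> bool \<Rightarrow> real" shows "prob_space (distr (WW r) borel h)"
  using real_dist_distr_WW unfolding real_dist_def by auto

lemma sets_distr_WW: "sets (distr (WW r) borel h) = sets borel" by simp

lemma law_WW:
  fixes h :: "bool \<times> bool \<Rightarrow> real"
  shows "data_law n p X \<beta> \<beta>Z b' (distr (WW r) borel h) (PeM r) =
    distr (PiM {..<n} (\<lambda>_. PeM r) \<Otimes>\<^sub>M PiM {..<n} (\<lambda>_. WW r)) (data_space n)
      (\<lambda>(x,w). dmap n p X \<beta> \<beta>Z b' (x, compose {..<n} h w))"
proof -
  define Q where "Q = distr (WW r) borel h"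
  have pQ1: "prob_space Q" unfolding Q_def by (rule prob_distr_WW)
  have hb: "h \<in> borel_measurable (WW r)" by (simp add: WW_def)
  have hm: "h \<in> measurable (WW r) Q" unfolding Q_def by (simp add: WW_def)
  have 1: "distr (PiM {..<n} (\<lambda>_. WW r)) (PiM {..<n} (\<lambda>_. Q)) (compose {..<n} h) = PiM {..<n} (\<lambda>_. distr (WW r) Q h)"
    using distr_PiM_finite_prob_space'[of "{..<n}" "\<lambda>_. WW r" "\<lambda>_. Q" h] prob_WW pQ1 hm by blast
  have 2: "distr (WW r) Q h = Q" unfolding Q_def by (rule distr_cong) auto
  have cm: "compose {..<n} h \<in> measurable (PiM {..<n} (\<lambda>_. WW r)) (PiM {..<n} (\<lambda>_. Q))"
    unfolding compose_def
  proof (rule measurable_restrict)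
    fix i assume "i \<in> {..<n}"
    then have "(\<lambda>w. w i) \<in> measurable (PiM {..<n} (\<lambda>_. WW r)) (WW r)"
      using measurable_component_singleton[of i "{..<n}" "\<lambda>_. WW r"] by simp
    then show "(\<lambda>w. h (w i)) \<in> measurable (PiM {..<n} (\<lambda>_. WW r)) Q"
      using hm by (rule measurable_compose)
  qed
  have pQ: "prob_space (PiM {..<n} (\<lambda>_. Q))" by (intro prob_space_PiM) (simp add: Q_def prob_distr_WW)
  have 3: "PiM {..<n} (\<lambda>_. PeM r) \<Otimes>\<^sub>M PiM {..<n} (\<lambda>_. Q) =
     distr (PiM {..<n} (\<lambda>_. PeM r) \<Otimes>\<^sub>M PiM {..<n} (\<lambda>_. WW r)) (PiM {..<n} (\<lambda>_. PeM r) \<Otimes>\<^sub>M PiM {..<n} (\<lambda>_. Q))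
       (\<lambda>(x, y). (x, compose {..<n} h y))"
  proof -
    have "PiM {..<n} (\<lambda>_. PeM r) \<Otimes>\<^sub>M PiM {..<n} (\<lambda>_. Q) =
      distr (PiM {..<n} (\<lambda>_. PeM r)) (PiM {..<n} (\<lambda>_. PeM r)) (\<lambda>x. x) \<Otimes>\<^sub>M distr (PiM {..<n} (\<lambda>_. WW r)) (PiM {..<n} (\<lambda>_. Q)) (compose {..<n} h)"
      using 1 2 by simp
    also have "\<dots> = distr (PiM {..<n} (\<lambda>_. PeM r) \<Otimes>\<^sub>M PiM {..<n} (\<lambda>_. WW r)) (PiM {..<n} (\<lambda>_. PeM r) \<Otimes>\<^sub>M PiM {..<n} (\<lambda>_. Q))
       (\<lambda>(x, y). (x, compose {..<n} h y))"
      by (rule pair_measure_distr) (use cm 1 2 pQ in \<open>auto intro: prob_space_imp_sigma_finite\<close>)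
    finally show ?thesis .
  qed
  have dm: "dmap n p X \<beta> \<beta>Z b' \<in> measurable (PiM {..<n} (\<lambda>_. PeM r) \<Otimes>\<^sub>M PiM {..<n} (\<lambda>_. Q)) (data_space n)"
  proof -
    have a: "sets (PeM r) = sets borel" unfolding PeM_def by (rule sets_distr)
    have b: "sets Q = sets borel" unfolding Q_def by (rule sets_distr)
    show ?thesis by (rule dmap_meas'[OF a b])
  qed
  have pm: "(\<lambda>(x, y). (x, compose {..<n} h y)) \<in> measurable (PiM {..<n} (\<lambda>_. PeM r) \<Otimes>\<^sub>M PiM {..<n} (\<lambda>_. WW r)) (PiM {..<n} (\<lambda>_. PeM r) \<Otimes>\<^sub>M PiM {..<n} (\<lambda>_. Q))"
    using cm by (simp add: split_beta' measurable_Pair measurable_compose[OF measurable_snd])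
  have "data_law n p X \<beta> \<beta>Z b' (distr (WW r) borel h) (PeM r) =
     distr (PiM {..<n} (\<lambda>_. PeM r) \<Otimes>\<^sub>M PiM {..<n} (\<lambda>_. Q)) (data_space n) (dmap n p X \<beta> \<beta>Z b')"
    unfolding data_law_dmap Q_def ..
  also have "\<dots> = distr (distr (PiM {..<n} (\<lambda>_. PeM r) \<Otimes>\<^sub>M PiM {..<n} (\<lambda>_. WW r)) (PiM {..<n} (\<lambda>_. PeM r) \<Otimes>\<^sub>M PiM {..<n} (\<lambda>_. Q))
       (\<lambda>(x, y). (x, compose {..<n} h y))) (data_space n) (dmap n p X \<beta> \<beta>Z b')"
    using arg_cong[OF 3, of "\<lambda>M. distr M (data_space n) (dmap n p X \<beta> \<beta>Z b')"] .
  also have "\<dots> = distr (PiM {..<n} (\<lambda>_. PeM r) \<Otimes>\<^sub>M PiM {..<n} (\<lambda>_. WW r)) (data_space n) (dmap n p X \<beta> \<beta>Z b' \<circ> (\<lambda>(x, y). (x, compose {..<n} h y)))"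
    by (rule distr_distr[OF dm pm])
  also have "dmap n p X \<beta> \<beta>Z b' \<circ> (\<lambda>(x, y). (x, compose {..<n} h y)) = (\<lambda>(x,w). dmap n p X \<beta> \<beta>Z b' (x, compose {..<n} h w))"
    by (simp add: comp_def split_beta')
  finally show ?thesis .
qed

lemma G_meas:
  fixes h :: "bool \<times> bool \<Rightarrow> real"
  shows "(\<lambda>(x,w). dmap n p X \<beta> \<beta>Z b' (x, compose {..<n} h w)) \<in>
     measurable (PiM {..<n} (\<lambda>_. PeM r) \<Otimes>\<^sub>M PiM {..<n} (\<lambda>_. WW r)) (data_space n)"
proof -
  define Q where "Q = distr (WW r) borel h"
  have hm: "h \<in> measurable (WW r) Q" unfolding Q_def by (simp add: WW_def)
  have cm: "compose {..<n} h \<in> measurable (PiM {..<n} (\<lambda>_. WW r)) (PiM {..<n} (\<lambda>_. Q))"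
    unfolding compose_def
  proof (rule measurable_restrict)
    fix i assume "i \<in> {..<n}"
    then have "(\<lambda>w. w i) \<in> measurable (PiM {..<n} (\<lambda>_. WW r)) (WW r)"
      using measurable_component_singleton[of i "{..<n}" "\<lambda>_. WW r"] by simp
    then show "(\<lambda>w. h (w i)) \<in> measurable (PiM {..<n} (\<lambda>_. WW r)) Q"
      using hm by (rule measurable_compose)
  qed
  have dm: "dmap n p X \<beta> \<beta>Z b' \<in> measurable (PiM {..<n} (\<lambda>_. PeM r) \<Otimes>\<^sub>M PiM {..<n} (\<lambda>_. Q)) (data_space n)"
  proof -
    have a: "sets (PeM r) = sets borel" unfolding PeM_def by (rule sets_distr)
    have b: "sets Q = sets borel" unfolding Q_def by (rule sets_distr)
    show ?thesis by (rule dmap_meas'[OF a b])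
  qed
  have pm: "(\<lambda>(x, y). (x, compose {..<n} h y)) \<in> measurable (PiM {..<n} (\<lambda>_. PeM r) \<Otimes>\<^sub>M PiM {..<n} (\<lambda>_. WW r)) (PiM {..<n} (\<lambda>_. PeM r) \<Otimes>\<^sub>M PiM {..<n} (\<lambda>_. Q))"
    using cm by (simp add: split_beta' measurable_Pair measurable_compose[OF measurable_snd])
  have "dmap n p X \<beta> \<beta>Z b' \<circ> (\<lambda>(x, y). (x, compose {..<n} h y)) \<in> measurable (PiM {..<n} (\<lambda>_. PeM r) \<Otimes>\<^sub>M PiM {..<n} (\<lambda>_. WW r)) (data_space n)"
    by (rule measurable_comp[OF pm dm])
  then show ?thesis by (simp add: comp_def split_beta')
qed

lemma measure_Times_prob:
  assumes "prob_space M1" "prob_space M2" "A \<in> sets M1" "B \<in> sets M2"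
  shows "measure (M1 \<Otimes>\<^sub>M M2) (A \<times> B) = measure M1 A * measure M2 B"
proof -
  interpret M2: prob_space M2 by fact
  have "emeasure (M1 \<Otimes>\<^sub>M M2) (A \<times> B) = emeasure M1 A * emeasure M2 B"
    using assms by (intro M2.emeasure_pair_measure_Times) auto
  then show ?thesis unfolding measure_def by (simp add: enn2real_mult)
qed

lemma measure_WW_notfst:
  assumes "0 \<le> r" "r \<le> 1"
  shows "measure (WW r) {w. \<not> fst w} = r"
proof -
  have e: "{w::bool\<times>bool. \<not> fst w} = {(False,True),(False,False)}" by auto
  show ?thesis unfolding WW_def e using assms
    by (subst measure_measure_pmf_finite) (auto simp: pmf_WW)
qed

lemma measure_PeM_ne1:
  assumes "0 < r" "r \<le> 1"
  shows "measure (PeM r) {y \<in> space (PeM r). y \<noteq> 1} = r"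
proof -
  have "measure (PeM r) {y \<in> space (PeM r). y \<noteq> 1} = measure (WW r) ((\<lambda>w. fE r (fst w)) -` {y \<in> space (PeM r). y \<noteq> 1} \<inter> space (WW r))"
    unfolding PeM_def by (rule measure_distr) (auto simp: WW_def)
  also have "(\<lambda>w. fE r (fst w)) -` {y \<in> space (PeM r). y \<noteq> 1} \<inter> space (WW r) = {w. \<not> fst w}"
  proof -
    have "fE r False \<noteq> 1" using assms by (simp add: fE_def) (smt (verit) divide_nonneg_pos)
    then show ?thesis by (auto simp: PeM_def WW_def fE_def)
  qed
  also have "measure (WW r) {w. \<not> fst w} = r" using assms by (intro measure_WW_notfst) auto
  finally show ?thesis .
qed

lemma coupling:
  assumes r: "0 < r" "r \<le> 1/8" and phi: "\<phi> \<in> tests n"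
  shows "1 - 2*r*n \<le> measure (data_law n p X (\<lambda>_. 0) (\<lambda>_. 0) 0 (PepsM b r) (PeM r)) {w \<in> space (data_space n). \<phi> w}
          + measure (data_law n p X (\<lambda>_. 0) (\<lambda>_. 0) b (PepsM 0 r) (PeM r)) {w \<in> space (data_space n). \<not> \<phi> w}"
proof -
  define I where "I = {..<n}"
  define M1 where "M1 = PiM I (\<lambda>_. PeM r)"
  define M2 where "M2 = PiM I (\<lambda>_. WW r)"
  define h0 where "h0 = (\<lambda>w. b * fE r (fst w) + gE (snd w))"
  define h1 where "h1 = (\<lambda>w. 0 * fE r (fst w) + gE (snd w))"
  define G0 where "G0 = (\<lambda>(x,w). dmap n p X (\<lambda>_. 0) (\<lambda>_. 0) 0 (x, compose {..<n} h0 w))"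
  define G1 where "G1 = (\<lambda>(x,w). dmap n p X (\<lambda>_. 0) (\<lambda>_. 0) b (x, compose {..<n} h1 w))"
  define S where "S = {w \<in> space (data_space n). \<phi> w}"
  define Sc where "Sc = {w \<in> space (data_space n). \<not> \<phi> w}"
  interpret PP: pair_prob_space M1 M2 unfolding M1_def M2_def by (intro pair_PiM_prob prob_PeM prob_WW)
  have G0m: "G0 \<in> measurable (M1 \<Otimes>\<^sub>M M2) (data_space n)" unfolding G0_def M1_def M2_def I_def by (rule G_meas)
  have G1m: "G1 \<in> measurable (M1 \<Otimes>\<^sub>M M2) (data_space n)" unfolding G1_def M1_def M2_def I_def by (rule G_meas)
  have phim: "\<phi> \<in> measurable (data_space n) (count_space UNIV)" using phi by (simp add: tests_def)
  have Sm: "S \<in> sets (data_space n)"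
  proof -
    have "\<phi> -` {True} \<inter> space (data_space n) \<in> sets (data_space n)" by (rule measurable_sets[OF phim]) auto
    moreover have "\<phi> -` {True} \<inter> space (data_space n) = S" by (auto simp: S_def)
    ultimately show ?thesis by simp
  qed
  have Scm: "Sc \<in> sets (data_space n)"
  proof -
    have "\<phi> -` {False} \<inter> space (data_space n) \<in> sets (data_space n)" by (rule measurable_sets[OF phim]) auto
    moreover have "\<phi> -` {False} \<inter> space (data_space n) = Sc" by (auto simp: Sc_def)
    ultimately show ?thesis by simp
  qed
  have L0: "data_law n p X (\<lambda>_. 0) (\<lambda>_. 0) 0 (PepsM b r) (PeM r) = distr (M1 \<Otimes>\<^sub>M M2) (data_space n) G0"
    unfolding PepsM_def G0_def M1_def M2_def I_def h0_def by (rule law_WW)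
  have L1: "data_law n p X (\<lambda>_. 0) (\<lambda>_. 0) b (PepsM 0 r) (PeM r) = distr (M1 \<Otimes>\<^sub>M M2) (data_space n) G1"
    unfolding PepsM_def G1_def M1_def M2_def I_def h1_def by (rule law_WW)
  define A0 where "A0 = G0 -` S \<inter> space (M1 \<Otimes>\<^sub>M M2)"
  define A1 where "A1 = G1 -` Sc \<inter> space (M1 \<Otimes>\<^sub>M M2)"
  have mA0: "measure (data_law n p X (\<lambda>_. 0) (\<lambda>_. 0) 0 (PepsM b r) (PeM r)) S = measure (M1 \<Otimes>\<^sub>M M2) A0"
    unfolding L0 A0_def by (rule measure_distr[OF G0m Sm])
  have mA1: "measure (data_law n p X (\<lambda>_. 0) (\<lambda>_. 0) b (PepsM 0 r) (PeM r)) Sc = measure (M1 \<Otimes>\<^sub>M M2) A1"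
    unfolding L1 A1_def by (rule measure_distr[OF G1m Scm])
  have A0s: "A0 \<in> sets (M1 \<Otimes>\<^sub>M M2)" unfolding A0_def by (rule measurable_sets[OF G0m Sm])
  have A1s: "A1 \<in> sets (M1 \<Otimes>\<^sub>M M2)" unfolding A1_def by (rule measurable_sets[OF G1m Scm])
  define C1 where "C1 = (\<lambda>i. {x \<in> space M1. x i \<noteq> 1})"
  define C2 where "C2 = (\<lambda>i. {w \<in> space M2. \<not> fst (w i)})"
  define B where "B = (\<lambda>i. C1 i \<times> space M2 \<union> space M1 \<times> C2 i)"
  have C1s: "C1 i \<in> sets M1" if "i \<in> I" for i
  proof -
    have m: "(\<lambda>x. x i) \<in> measurable M1 (PeM r)" unfolding M1_def
      using measurable_component_singleton[of i I "\<lambda>_. PeM r"] that by simp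
    have "{y. y \<noteq> (1::real)} \<in> sets (PeM r)" unfolding PeM_def by simp
    then have "(\<lambda>x. x i) -` {y. y \<noteq> (1::real)} \<inter> space M1 \<in> sets M1" by (rule measurable_sets[OF m])
    moreover have "(\<lambda>x. x i) -` {y. y \<noteq> (1::real)} \<inter> space M1 = C1 i" by (auto simp: C1_def)
    ultimately show ?thesis by simp
  qed
  have C2s: "C2 i \<in> sets M2" if "i \<in> I" for i
  proof -
    have m: "(\<lambda>x. x i) \<in> measurable M2 (WW r)" unfolding M2_def
      using measurable_component_singleton[of i I "\<lambda>_. WW r"] that by simp
    have "{y. \<not> fst y} \<in> sets (WW r)" unfolding WW_def by simp
    then have "(\<lambda>x. x i) -` {y. \<not> fst y} \<inter> space M2 \<in> sets M2" by (rule measurable_sets[OF m])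
    moreover have "(\<lambda>x. x i) -` {y. \<not> fst y} \<inter> space M2 = C2 i" by (auto simp: C2_def)
    ultimately show ?thesis by simp
  qed
  have Bs: "B i \<in> sets (M1 \<Otimes>\<^sub>M M2)" if "i \<in> I" for i
    unfolding B_def using C1s[OF that] C2s[OF that] by (intro sets.Un pair_measureI) auto
  have mC1: "measure M1 (C1 i) = r" if "i \<in> I" for i
  proof -
    have d: "distr M1 (PeM r) (\<lambda>x. x i) = PeM r" unfolding M1_def
      by (rule distr_PiM_component) (use that prob_PeM in auto)
    have m: "(\<lambda>x. x i) \<in> measurable M1 (PeM r)" unfolding M1_def
      using measurable_component_singleton[of i I "\<lambda>_. PeM r"] that by simp
    have s: "{y \<in> space (PeM r). y \<noteq> 1} \<in> sets (PeM r)" unfolding PeM_def by simp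
    have "measure (PeM r) {y \<in> space (PeM r). y \<noteq> 1} = measure M1 ((\<lambda>x. x i) -` {y \<in> space (PeM r). y \<noteq> 1} \<inter> space M1)"
      using measure_distr[OF m s] d by simp
    also have "(\<lambda>x. x i) -` {y \<in> space (PeM r). y \<noteq> 1} \<inter> space M1 = C1 i"
      using measurable_space[OF m] by (auto simp: C1_def)
    finally show ?thesis using measure_PeM_ne1[of r] r by simp
  qed
  have mC2: "measure M2 (C2 i) = r" if "i \<in> I" for i
  proof -
    have d: "distr M2 (WW r) (\<lambda>x. x i) = WW r" unfolding M2_def
      by (rule distr_PiM_component) (use that prob_WW in auto)
    have m: "(\<lambda>x. x i) \<in> measurable M2 (WW r)" unfolding M2_def
      using measurable_component_singleton[of i I "\<lambda>_. WW r"] that by simp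
    have s: "{y. \<not> fst y} \<in> sets (WW r)" unfolding WW_def by simp
    have "measure (WW r) {y. \<not> fst y} = measure M2 ((\<lambda>x. x i) -` {y. \<not> fst y} \<inter> space M2)"
      using measure_distr[OF m s] d by simp
    also have "(\<lambda>x. x i) -` {y. \<not> fst y} \<inter> space M2 = C2 i" by (auto simp: C2_def)
    finally show ?thesis using measure_WW_notfst[of r] r by simp
  qed
  have mB: "measure (M1 \<Otimes>\<^sub>M M2) (B i) \<le> 2 * r" if "i \<in> I" for i
  proof -
    have "measure (M1 \<Otimes>\<^sub>M M2) (B i) \<le> measure (M1 \<Otimes>\<^sub>M M2) (C1 i \<times> space M2) + measure (M1 \<Otimes>\<^sub>M M2) (space M1 \<times> C2 i)"
      unfolding B_def using C1s[OF that] C2s[OF that]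
      by (intro measure_subadditive) (auto intro!: pair_measureI simp: PP.emeasure_finite)
    also have "measure (M1 \<Otimes>\<^sub>M M2) (C1 i \<times> space M2) = r"
      using measure_Times_prob[OF PP.M1.prob_space_axioms PP.M2.prob_space_axioms C1s[OF that] sets.top] mC1[OF that]
      by (simp add: PP.M2.prob_space)
    also have "measure (M1 \<Otimes>\<^sub>M M2) (space M1 \<times> C2 i) = r"
      using measure_Times_prob[OF PP.M1.prob_space_axioms PP.M2.prob_space_axioms sets.top C2s[OF that]] mC2[OF that]
      by (simp add: PP.M1.prob_space)
    finally show ?thesis by simp
  qed
  have mBad: "measure (M1 \<Otimes>\<^sub>M M2) (\<Union>i\<in>I. B i) \<le> 2 * r * n"
  proof -
    have "measure (M1 \<Otimes>\<^sub>M M2) (\<Union>i\<in>I. B i) \<le> (\<Sum>i\<in>I. measure (M1 \<Otimes>\<^sub>M M2) (B i))"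
      by (rule PP.finite_measure_subadditive_finite) (use Bs in \<open>auto simp: I_def\<close>)
    also have "\<dots> \<le> (\<Sum>i\<in>I. 2 * r)" by (rule sum_mono) (rule mB)
    also have "\<dots> = 2 * r * n" by (simp add: I_def)
    finally show ?thesis .
  qed
  have Bad_s: "(\<Union>i\<in>I. B i) \<in> sets (M1 \<Otimes>\<^sub>M M2)" using Bs by (auto simp: I_def)
  have cover: "space (M1 \<Otimes>\<^sub>M M2) \<subseteq> A0 \<union> A1 \<union> (\<Union>i\<in>I. B i)"
  proof
    fix z assume z: "z \<in> space (M1 \<Otimes>\<^sub>M M2)"
    obtain x w where zxw: "z = (x, w)" by (cases z)
    have x: "x \<in> space M1" and w: "w \<in> space M2" using z zxw by (auto simp: space_pair_measure)
    show "z \<in> A0 \<union> A1 \<union> (\<Union>i\<in>I. B i)"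
    proof (cases "z \<in> (\<Union>i\<in>I. B i)")
      case True then show ?thesis by simp
    next
      case False
      then have good: "x i = 1 \<and> fst (w i)" if "i \<in> I" for i
        using that x w zxw by (auto simp: B_def C1_def C2_def)
      have eq: "G0 z = G1 z"
        unfolding G0_def G1_def zxw using good
        by (auto simp: dmap_def Let_def compose_def h0_def h1_def fE_def I_def fun_eq_iff restrict_def)
      have "G0 z \<in> space (data_space n)" using measurable_space[OF G0m z] .
      then have "G0 z \<in> S \<or> G1 z \<in> Sc" using eq by (auto simp: S_def Sc_def)
      then show ?thesis using z by (auto simp: A0_def A1_def)
    qed
  qed
  have "1 = measure (M1 \<Otimes>\<^sub>M M2) (space (M1 \<Otimes>\<^sub>M M2))" by (simp add: PP.prob_space)
  also have "\<dots> \<le> measure (M1 \<Otimes>\<^sub>M M2) (A0 \<union> A1 \<union> (\<Union>i\<in>I. B i))"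
    by (rule PP.finite_measure_mono[OF cover]) (use A0s A1s Bad_s in auto)
  also have "\<dots> \<le> measure (M1 \<Otimes>\<^sub>M M2) (A0 \<union> A1) + measure (M1 \<Otimes>\<^sub>M M2) (\<Union>i\<in>I. B i)"
    by (rule measure_subadditive) (use A0s A1s Bad_s in \<open>auto simp: PP.emeasure_finite\<close>)
  also have "measure (M1 \<Otimes>\<^sub>M M2) (A0 \<union> A1) \<le> measure (M1 \<Otimes>\<^sub>M M2) A0 + measure (M1 \<Otimes>\<^sub>M M2) A1"
    by (rule measure_subadditive) (use A0s A1s in \<open>auto simp: PP.emeasure_finite\<close>)
  finally show ?thesis using mA0 mA1 mBad unfolding S_def Sc_def by linarith
qed

lemma param_bound:
  fixes t \<eta> :: real and n :: nat
  assumes t: "0 \<le> t" "t \<le> 1" and eta: "0 < \<eta>" "\<eta> < 1"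
  defines "c \<equiv> \<eta> / 256"
  defines "b \<equiv> c * real n powr (- t / (1 + t))"
  defines "r \<equiv> \<eta> / (8 * (real n + 1))"
  shows "0 \<le> b" "b \<le> 1/16" "r * (b/r) powr (1+t) \<le> 1/16" "0 < r" "r \<le> 1/8"
proof -
  show r0: "0 < r" using eta by (simp add: r_def)
  show "r \<le> 1/8" using eta by (simp add: r_def field_simps)
  show b0: "0 \<le> b" using eta by (simp add: b_def c_def)
  have "b \<le> 1/16 \<and> r * (b/r) powr (1+t) \<le> 1/16"
  proof (cases "n = 0")
    case True
    then have "b = 0" by (simp add: b_def)
    then show ?thesis by simp
  next
    case False
    then have n1: "real n \<ge> 1" by simp
    define m where "m = real n powr (- t / (1 + t))"
    have m0: "0 < m" using n1 by (simp add: m_def)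
    have m1: "m \<le> 1"
    proof -
      have "m \<le> real n powr 0" unfolding m_def by (rule powr_mono) (use n1 t in \<open>auto simp: field_simps\<close>)
      then show ?thesis using n1 by simp
    qed
    have bm: "b = c * m" by (simp add: b_def m_def)
    have bpos: "0 < b" using m0 eta by (simp add: bm c_def)
    have bl: "b \<le> 1/16" using m1 m0 eta by (simp add: bm c_def) (smt (verit) mult_le_one)
    have br: "b / r = m * ((real n + 1) / 32)" using eta by (simp add: bm c_def r_def field_simps)
    have e1: "(b/r) powr (1+t) = (b/r) * (b/r) powr t"
      using bpos r0 by (simp add: powr_add)
    have e2: "r * (b/r) powr (1+t) = b * (b/r) powr t" using e1 r0 by simp
    have e3: "(b/r) powr t = m powr t * ((real n + 1) / 32) powr t" unfolding br
      using m0 powr_mult[of m "(real n + 1) / 32" t] by simp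
    have e4: "m * m powr t = real n powr (- t)"
    proof -
      have "m * m powr t = m powr (1 + t)" using m0 by (simp add: powr_add)
      also have "\<dots> = real n powr (- t / (1 + t) * (1 + t))" unfolding m_def by (simp add: powr_powr)
      also have "- t / (1 + t) * (1 + t) = - t" using t by (simp add: field_simps)
      finally show ?thesis .
    qed
    have e5: "real n powr (- t) * ((real n + 1) / 32) powr t = ((real n + 1) / 32 / real n) powr t"
    proof -
      have a: "((real n + 1) / 32 / real n) powr t = ((real n + 1) / 32) powr t / real n powr t"
        by (rule powr_divide)
      have b: "real n powr (- t) = inverse (real n powr t)" by (rule powr_minus)
      show ?thesis unfolding a b by (simp only: divide_inverse mult.commute)
    qed
    have e6: "((real n + 1) / 32 / real n) powr t \<le> 1"
    proof -
      have "((real n + 1) / 32 / real n) powr t \<le> 1 powr t"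
        by (rule powr_mono2) (use t n1 in \<open>auto simp: field_simps\<close>)
      then show ?thesis by simp
    qed
    have "r * (b/r) powr (1+t) = c * (((real n + 1) / 32 / real n) powr t)"
    proof -
      have "r * (b/r) powr (1+t) = b * (m powr t * ((real n + 1) / 32) powr t)"
        using e2 e3 by simp
      also have "\<dots> = c * ((m * m powr t) * ((real n + 1) / 32) powr t)"
        by (simp only: bm ac_simps)
      also have "\<dots> = c * (((real n + 1) / 32 / real n) powr t)" unfolding e4 e5 ..
      finally show ?thesis .
    qed
    also have "\<dots> \<le> c * 1" using e6 eta by (intro mult_left_mono) (auto simp: c_def)
    also have "\<dots> \<le> 1/16" using eta by (simp add: c_def)
    finally show ?thesis using bl by simp
  qed
  then show "b \<le> 1/16" "r * (b/r) powr (1+t) \<le> 1/16" by auto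
qed

lemma measure_law_le1:
  assumes "Peps \<in> D_class s" "Pe \<in> D_class 1 \<inter> D_tilde"
  shows "measure (data_law n p X \<beta> \<beta>Z b Peps Pe) A \<le> 1"
proof -
  have "real_dist Peps" "real_dist Pe" using assms by (auto simp: D_class_def)
  then interpret prob_space "data_law n p X \<beta> \<beta>Z b Peps Pe" by (rule prob_data_law)
  show ?thesis by (rule prob_le_1)
qed

theorem theorem4:
  fixes t :: real
  assumes "0 \<le> t" and "t \<le> 1"
  shows "\<forall>\<eta>::real. 0 < \<eta> \<and> \<eta> < 1 \<longrightarrow>
           (\<exists>c::real. c > 0 \<and>
              (\<forall>(n::nat) (p::nat) (X::nat \<Rightarrow> nat \<Rightarrow> real).
                 minimax_risk (1 + t) n p X (c * real n powr (- t / (1 + t))) \<ge> 1 - \<eta>))"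
proof (intro allI impI)
  fix \<eta> :: real assume eta: "0 < \<eta> \<and> \<eta> < 1"
  show "\<exists>c::real. c > 0 \<and>
              (\<forall>(n::nat) (p::nat) (X::nat \<Rightarrow> nat \<Rightarrow> real).
                 minimax_risk (1 + t) n p X (c * real n powr (- t / (1 + t))) \<ge> 1 - \<eta>)"
  proof (intro exI conjI allI)
    show "0 < \<eta> / 256" using eta by simp
    fix n p :: nat and X :: "nat \<Rightarrow> nat \<Rightarrow> real"
    define b where "b = \<eta> / 256 * real n powr (- t / (1 + t))"
    define r where "r = \<eta> / (8 * (real n + 1))"
    have pb: "0 \<le> b" "b \<le> 1/16" "r * (b/r) powr (1+t) \<le> 1/16" "0 < r" "r \<le> 1/8"
      using param_bound[OF assms, of \<eta> n] eta unfolding b_def r_def by auto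
    have Pe: "PeM r \<in> D_class 1 \<inter> D_tilde" using pb by (intro PeM_in) auto
    have P0: "PepsM b r \<in> D_class (1+t)" using pb assms by (intro PepsM_in) auto
    have P1: "PepsM 0 r \<in> D_class (1+t)" using pb assms by (intro PepsM_in) auto
    have rn: "2 * r * real n \<le> \<eta>"
    proof -
      have "2 * r * real n = \<eta> * (real n / (4 * (real n + 1)))" by (simp add: r_def field_simps)
      also have "\<dots> \<le> \<eta> * 1" using eta by (intro mult_left_mono) (auto simp: field_simps)
      finally show ?thesis by simp
    qed
    show "minimax_risk (1 + t) n p X (\<eta> / 256 * real n powr (- t / (1 + t))) \<ge> 1 - \<eta>"
      unfolding minimax_risk_def b_def[symmetric]
    proof (rule cInf_greatest)
      have "(\<lambda>_. True) \<in> tests n" by (simp add: tests_def)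
      then show "{type1_err (1 + t) n p X \<phi> + type2_err (1 + t) n p X b \<phi> | \<phi>. \<phi> \<in> tests n} \<noteq> {}" by blast
    next
      fix v assume "v \<in> {type1_err (1 + t) n p X \<phi> + type2_err (1 + t) n p X b \<phi> | \<phi>. \<phi> \<in> tests n}"
      then obtain \<phi> where phi: "\<phi> \<in> tests n" and v: "v = type1_err (1 + t) n p X \<phi> + type2_err (1 + t) n p X b \<phi>" by blast
      have t1: "measure (data_law n p X (\<lambda>_. 0) (\<lambda>_. 0) 0 (PepsM b r) (PeM r)) {w \<in> space (data_space n). \<phi> w} \<le> type1_err (1 + t) n p X \<phi>"
        unfolding type1_err_def
      proof (rule cSup_upper)
        show "measure (data_law n p X (\<lambda>_. 0) (\<lambda>_. 0) 0 (PepsM b r) (PeM r)) {w \<in> space (data_space n). \<phi> w}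
          \<in> {measure (data_law n p X \<beta> \<beta>Z 0 Peps Pe) {w \<in> space (data_space n). \<phi> w} | Peps Pe \<beta> \<beta>Z.
               Peps \<in> D_class (1 + t) \<and> Pe \<in> D_class 1 \<inter> D_tilde}"
          using P0 Pe by blast
        show "bdd_above {measure (data_law n p X \<beta> \<beta>Z 0 Peps Pe) {w \<in> space (data_space n). \<phi> w} | Peps Pe \<beta> \<beta>Z.
               Peps \<in> D_class (1 + t) \<and> Pe \<in> D_class 1 \<inter> D_tilde}"
          by (rule bdd_aboveI[of _ 1]) (auto intro: measure_law_le1)
      qed
      have t2: "measure (data_law n p X (\<lambda>_. 0) (\<lambda>_. 0) b (PepsM 0 r) (PeM r)) {w \<in> space (data_space n). \<not> \<phi> w} \<le> type2_err (1 + t) n p X b \<phi>"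
        unfolding type2_err_def
      proof (rule cSup_upper)
        show "measure (data_law n p X (\<lambda>_. 0) (\<lambda>_. 0) b (PepsM 0 r) (PeM r)) {w \<in> space (data_space n). \<not> \<phi> w}
          \<in> {measure (data_law n p X \<beta> \<beta>Z b' Peps Pe) {w \<in> space (data_space n). \<not> \<phi> w} | b' Peps Pe \<beta> \<beta>Z.
               \<bar>b'\<bar> \<ge> b \<and> Peps \<in> D_class (1 + t) \<and> Pe \<in> D_class 1 \<inter> D_tilde}"
          using P1 Pe pb by fastforce
        show "bdd_above {measure (data_law n p X \<beta> \<beta>Z b' Peps Pe) {w \<in> space (data_space n). \<not> \<phi> w} | b' Peps Pe \<beta> \<beta>Z.
               \<bar>b'\<bar> \<ge> b \<and> Peps \<in> D_class (1 + t) \<and> Pe \<in> D_class 1 \<inter> D_tilde}"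
          by (rule bdd_aboveI[of _ 1]) (auto intro: measure_law_le1)
      qed
      have "1 - 2*r*n \<le> measure (data_law n p X (\<lambda>_. 0) (\<lambda>_. 0) 0 (PepsM b r) (PeM r)) {w \<in> space (data_space n). \<phi> w}
          + measure (data_law n p X (\<lambda>_. 0) (\<lambda>_. 0) b (PepsM 0 r) (PeM r)) {w \<in> space (data_space n). \<not> \<phi> w}"
        using pb phi by (intro coupling) auto
      then show "1 - \<eta> \<le> v" using t1 t2 rn v by linarith
    qed
  qed
qed

end
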